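(* Let $p\geq 3$ be a prime and let $H=(a_1,\dots,a_p)^\perp\subset\mathbb{R}^p$ be a hyperplane. Assume there exists $i$ such that $a_j\neq a_i$ for all $j\neq i$. Then $|H\cap S_pv|\leq (p-1)!$ for all $v\in\mathbb{R}^p$ with pairwise distinct coordinates.
   Context: $S_p$ acts on $\mathbb{R}^p$ by permuting coordinates and $S_pv$ is the orbit of $v$. $(a_1,\dots,a_p)^\perp$ denotes the hyperplane $\{x:\sum_m a_mx_m=0\}$ with $(a_1,\dots,a_p)\neq 0$. *)

theory Defs
  imports "HOL-Analysis.Analysis" "HOL-Computational_Algebra.Primes"
begin

text \<open>Vectors in R^p are represented as functions nat => real, only the coordinates
  0..p-1 being relevant.  Orbit of v under S_p acting by permuting coordinates;
  entries outside {..<p} are normalised to 0 so that distinct orbit points are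
  distinct functions.\<close>

definition perm_orbit :: "nat \<Rightarrow> (nat \<Rightarrow> real) \<Rightarrow> (nat \<Rightarrow> real) set" where
  "perm_orbit p v = {(\<lambda>m. if m < p then v (\<sigma> m) else 0) | \<sigma>. \<sigma> permutes {..<p}}"

definition hyperplane_perp :: "nat \<Rightarrow> (nat \<Rightarrow> real) \<Rightarrow> (nat \<Rightarrow> real) set" where
  "hyperplane_perp p a = {x. (\<Sum>m<p. a m * x m) = 0}"

end

theory Submission imports Defs begin

definition Fa :: "nat \<Rightarrow> (nat \<Rightarrow> real) \<Rightarrow> (nat \<Rightarrow> real) \<Rightarrow> real" where
  "Fa p a x = (\<Sum>m<p. a m * x m)"

definition Tset :: "nat \<Rightarrow> (nat \<Rightarrow> real) \<Rightarrow> nat \<Rightarrow> nat set" where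
  "Tset p a i = {j. j < p \<and> a i < a j}"

definition up :: "nat set \<Rightarrow> nat \<Rightarrow> (nat \<Rightarrow> real) \<Rightarrow> nat \<Rightarrow> real" where
  "up T i x = (if (\<exists>j\<in>T. x i < x j)
     then x \<circ> Transposition.transpose i (SOME j. j \<in> T \<and> x i < x j \<and> (\<forall>l\<in>T. x i < x l \<longrightarrow> x j \<le> x l))
     else x)"

lemma swap_F:
  assumes "i < p" "j < p" "i \<noteq> j"
  shows "Fa p a (x \<circ> Transposition.transpose i j) = Fa p a x + (a j - a i) * (x i - x j)"
proof -
  let ?t = "Transposition.transpose i j"
  have A: "{..<p} = insert i (insert j ({..<p} - {i} - {j}))" using assms by auto
  have s1: "(\<Sum>m<p. a m * (x \<circ> ?t) m) = a i * x j + (a j * x i + (\<Sum>m\<in>{..<p} - {i} - {j}. a m * (x \<circ> ?t) m))"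
    by (subst A, subst sum.insert, simp, simp add: assms, subst sum.insert, auto simp: assms)
  have s2: "(\<Sum>m<p. a m * x m) = a i * x i + (a j * x j + (\<Sum>m\<in>{..<p} - {i} - {j}. a m * x m))"
    by (subst A, subst sum.insert, simp, simp add: assms, subst sum.insert, auto simp: assms)
  have s3: "(\<Sum>m\<in>{..<p} - {i} - {j}. a m * (x \<circ> ?t) m) = (\<Sum>m\<in>{..<p} - {i} - {j}. a m * x m)"
    by (rule sum.cong) auto
  show ?thesis unfolding Fa_def using s1 s2 s3 by (simp add: algebra_simps)
qed

lemma argmin_ex:
  fixes x :: "nat \<Rightarrow> real"
  assumes "finite T" "\<exists>j\<in>T. x i < x j"
  shows "\<exists>j. j \<in> T \<and> x i < x j \<and> (\<forall>l\<in>T. x i < x l \<longrightarrow> x j \<le> x l)"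
proof -
  let ?S = "{l\<in>T. x i < x l}"
  have fin: "finite (x ` ?S)" using assms by auto
  have ne: "x ` ?S \<noteq> {}" using assms by auto
  have "Min (x ` ?S) \<in> x ` ?S" using Min_in fin ne by blast
  then obtain j where j: "j \<in> ?S" "x j = Min (x ` ?S)" by auto
  have "\<forall>l\<in>T. x i < x l \<longrightarrow> x j \<le> x l" using j fin by auto
  with j show ?thesis by blast
qed

lemma up_moved:
  assumes "finite T" "\<exists>j\<in>T. x i < x j"
  obtains j where "j \<in> T" "x i < x j" "\<forall>l\<in>T. x i < x l \<longrightarrow> x j \<le> x l"
     "up T i x = x \<circ> Transposition.transpose i j"
proof -
  let ?P = "\<lambda>j. j \<in> T \<and> x i < x j \<and> (\<forall>l\<in>T. x i < x l \<longrightarrow> x j \<le> x l)"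
  have "?P (SOME j. ?P j)" using someI_ex[OF argmin_ex[OF assms]] .
  then show ?thesis using that assms(2) unfolding up_def by auto
qed

lemma up_le:
  assumes "T \<subseteq> Tset p a i" "i < p"
  shows "Fa p a (up T i x) \<le> Fa p a x \<and> (Fa p a (up T i x) = Fa p a x \<longrightarrow> up T i x = x)"
proof (cases "\<exists>j\<in>T. x i < x j")
  case True
  have fin: "finite T" using assms(1) finite_subset[of T "{..<p}"] unfolding Tset_def by auto
  obtain j where j: "j \<in> T" "x i < x j" "up T i x = x \<circ> Transposition.transpose i j"
    using up_moved[OF fin True] by metis
  have jp: "j < p" "a i < a j" using j assms(1) unfolding Tset_def by auto
  then have "i \<noteq> j" by auto
  have "Fa p a (up T i x) = Fa p a x + (a j - a i) * (x i - x j)"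
    using swap_F[OF assms(2) jp(1) \<open>i \<noteq> j\<close>] j(3) by simp
  moreover have "(a j - a i) * (x i - x j) < 0"
    using jp(2) j(2) by (simp add: mult_pos_neg)
  ultimately have "Fa p a (up T i x) < Fa p a x" by linarith
  then show ?thesis by simp
next
  case False
  then show ?thesis unfolding up_def by simp
qed

lemma up_iter:
  assumes "T \<subseteq> Tset p a i" "i < p"
  shows "Fa p a ((up T i ^^ k) x) \<le> Fa p a x \<and> (Fa p a ((up T i ^^ k) x) = Fa p a x \<longrightarrow> (up T i ^^ k) x = x)"
proof (induction k)
  case 0
  then show ?case by simp
next
  case (Suc k)
  let ?y = "(up T i ^^ k) x"
  have h: "Fa p a (up T i ?y) \<le> Fa p a ?y \<and> (Fa p a (up T i ?y) = Fa p a ?y \<longrightarrow> up T i ?y = ?y)"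
    using up_le[OF assms] .
  show ?case
  proof -
    have "Fa p a ((up T i ^^ Suc k) x) = Fa p a (up T i ?y)" by simp
    then show ?thesis using h Suc.IH by auto
  qed
qed

lemma up_iter2:
  assumes "T \<subseteq> Tset p a i" "i < p" "k \<le> k'"
  shows "Fa p a ((up T i ^^ k') x) \<le> Fa p a ((up T i ^^ k) x) \<and>
     (Fa p a ((up T i ^^ k') x) = Fa p a ((up T i ^^ k) x) \<longrightarrow> (up T i ^^ k') x = (up T i ^^ k) x)"
proof -
  have e: "(up T i ^^ k') x = (up T i ^^ (k' - k)) ((up T i ^^ k) x)"
    using assms(3) by (metis funpow_add le_add_diff_inverse2 o_apply)
  show ?thesis unfolding e using up_iter[OF assms(1,2)] by blast
qed

lemma orbit_swap:
  assumes "x \<in> perm_orbit p v" "i < p" "j < p"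
  shows "x \<circ> Transposition.transpose i j \<in> perm_orbit p v"
proof -
  obtain \<sigma> where s: "x = (\<lambda>m. if m < p then v (\<sigma> m) else 0)" "\<sigma> permutes {..<p}"
    using assms(1) unfolding perm_orbit_def by auto
  let ?t = "Transposition.transpose i j"
  have "?t permutes {..<p}" using assms(2,3) by (simp add: permutes_swap_id)
  then have p2: "\<sigma> \<circ> ?t permutes {..<p}" using s(2) by (rule permutes_compose)
  have "x \<circ> ?t = (\<lambda>m. if m < p then v ((\<sigma> \<circ> ?t) m) else 0)"
  proof
    fix m show "(x \<circ> ?t) m = (if m < p then v ((\<sigma> \<circ> ?t) m) else 0)"
      using assms(2,3) unfolding s(1) by (auto simp: Transposition.transpose_def)
  qed
  then show ?thesis using p2 unfolding perm_orbit_def by blast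
qed

lemma orbit_props:
  assumes "x \<in> perm_orbit p v" "inj_on v {..<p}"
  shows "inj_on x {..<p}" "x ` {..<p} = v ` {..<p}"
proof -
  obtain \<sigma> where s: "x = (\<lambda>m. if m < p then v (\<sigma> m) else 0)" "\<sigma> permutes {..<p}"
    using assms(1) unfolding perm_orbit_def by auto
  have im: "\<sigma> ` {..<p} = {..<p}" using s(2) by (rule permutes_image)
  have inj: "inj_on \<sigma> {..<p}" using s(2) by (rule permutes_inj_on)
  have e: "x ` {..<p} = (v \<circ> \<sigma>) ` {..<p}" unfolding s(1) by auto
  show "x ` {..<p} = v ` {..<p}" unfolding e image_comp[symmetric] im ..
  have "inj_on (v \<circ> \<sigma>) {..<p}" using inj assms(2) im by (simp add: comp_inj_on)
  then show "inj_on x {..<p}" unfolding s(1) inj_on_def by auto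
qed

lemma up_orbit:
  assumes "x \<in> perm_orbit p v" "T \<subseteq> Tset p a i" "i < p"
  shows "up T i x \<in> perm_orbit p v"
proof (cases "\<exists>j\<in>T. x i < x j")
  case True
  have fin: "finite T" using assms(2) finite_subset[of T "{..<p}"] unfolding Tset_def by auto
  obtain j where j: "j \<in> T" "up T i x = x \<circ> Transposition.transpose i j"
    using up_moved[OF fin True] by metis
  have "j < p" using j assms(2) unfolding Tset_def by auto
  then show ?thesis using j orbit_swap[OF assms(1,3)] by simp
next
  case False
  then show ?thesis using assms unfolding up_def by simp
qed

lemma up_iter_orbit:
  assumes "x \<in> perm_orbit p v" "T \<subseteq> Tset p a i" "i < p"
  shows "(up T i ^^ k) x \<in> perm_orbit p v"
  by (induction k) (auto intro: up_orbit[OF _ assms(2,3)] simp: assms(1))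

lemma cover:
  assumes v: "inj_on v {..<p}" and ip: "i < p" and m0: "m0 = Min (v ` {..<p})"
  shows "x \<in> perm_orbit p v \<Longrightarrow> (x i = m0 \<or> (\<exists>j0\<in>Tset p a i. x j0 = m0)) \<Longrightarrow>
    \<exists>z\<in>perm_orbit p v. z i = m0 \<and> (\<exists>k. x = (up (Tset p a i) i ^^ k) z)"
proof (induction "card {l \<in> Tset p a i. x l < x i}" arbitrary: x rule: less_induct)
  case less
  let ?T = "Tset p a i"
  have xO: "x \<in> perm_orbit p v" by fact
  have injx: "inj_on x {..<p}" and imx: "x ` {..<p} = v ` {..<p}"
    using orbit_props[OF xO v] by auto
  have finT: "finite ?T" unfolding Tset_def by auto
  have iT: "i \<notin> ?T" unfolding Tset_def by auto
  have Tp: "\<And>l. l \<in> ?T \<Longrightarrow> l < p" unfolding Tset_def by auto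
  show ?case
  proof (cases "x i = m0")
    case True
    then show ?thesis using xO by (intro bexI[of _ x]) (auto intro: exI[of _ 0])
  next
    case False
    then obtain j0 where j0: "j0 \<in> ?T" "x j0 = m0" using less.prems(2) by auto
    have "x i \<in> v ` {..<p}" using imx ip by auto
    then have "m0 \<le> x i" unfolding m0 by (intro Min_le) auto
    with False have j0lt: "x j0 < x i" using j0 by auto
    define B where "B = {l \<in> ?T. x l < x i}"
    have finB: "finite B" using finT unfolding B_def by auto
    have j0B: "j0 \<in> B" using j0 j0lt unfolding B_def by auto
    have "Max (x ` B) \<in> x ` B" using finB j0B by (intro Max_in) auto
    then obtain j where jB: "j \<in> B" and jmax: "x j = Max (x ` B)" by auto
    have jmax': "\<And>l. l \<in> B \<Longrightarrow> x l \<le> x j" using finB jmax by auto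
    have jT: "j \<in> ?T" and jlt: "x j < x i" using jB unfolding B_def by auto
    have jp: "j < p" using Tp jT by auto
    have ji: "j \<noteq> i" using jT iT by auto
    let ?t = "Transposition.transpose i j"
    define y where "y = x \<circ> ?t"
    have yO: "y \<in> perm_orbit p v" unfolding y_def using orbit_swap[OF xO ip jp] .
    have yi: "y i = x j" and yj: "y j = x i" unfolding y_def by auto
    have yl: "\<And>l. l \<noteq> i \<Longrightarrow> l \<noteq> j \<Longrightarrow> y l = x l" unfolding y_def by auto
    have sub: "{l \<in> ?T. y l < y i} \<subseteq> B - {j}"
    proof
      fix l assume l: "l \<in> {l \<in> ?T. y l < y i}"
      then have "l \<noteq> j" using yi yj jlt by auto
      moreover have "l \<noteq> i" using l iT by auto
      ultimately show "l \<in> B - {j}" using l yl yi jlt unfolding B_def by auto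
    qed
    have "card {l \<in> ?T. y l < y i} \<le> card (B - {j})"
      using sub finB by (intro card_mono) auto
    also have "\<dots> < card B" using finB jB by (rule card_Diff1_less)
    finally have lt: "card {l \<in> ?T. y l < y i} < card {l \<in> ?T. x l < x i}" unfolding B_def .
    have pre: "y i = m0 \<or> (\<exists>j0\<in>?T. y j0 = m0)"
    proof (cases "j = j0")
      case True then show ?thesis using yi j0 by auto
    next
      case False
      have "j0 \<noteq> i" using j0 iT by auto
      then show ?thesis using False yl j0 by auto
    qed
    obtain z k where z: "z \<in> perm_orbit p v" "z i = m0" "y = (up ?T i ^^ k) z"
      using less.hyps[OF lt yO pre] by blast
    have ex: "\<exists>l\<in>?T. y i < y l" using jT yi yj jlt by (intro bexI[of _ j]) auto
    obtain j' where j': "j' \<in> ?T" "y i < y j'" "\<forall>l\<in>?T. y i < y l \<longrightarrow> y j' \<le> y l"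
      "up ?T i y = y \<circ> Transposition.transpose i j'"
      using up_moved[OF finT ex] by metis
    have "j' = j"
    proof (rule ccontr)
      assume ne: "j' \<noteq> j"
      have j'i: "j' \<noteq> i" using j' iT by auto
      have "y j' \<le> y j" using j'(3) jT yi yj jlt by auto
      then have "x j' \<le> x i" using yl[OF j'i ne] yj by auto
      moreover have "x j' \<noteq> x i" using injx j'i Tp[OF j'(1)] ip unfolding inj_on_def by auto
      ultimately have "j' \<in> B" using j'(1) unfolding B_def by auto
      then have "x j' \<le> x j" by (rule jmax')
      moreover have "x j < x j'" using j'(2) yi yl[OF j'i ne] by auto
      ultimately show False by auto
    qed
    then have "up ?T i y = x" using j'(4) unfolding y_def by (auto simp: fun_eq_iff)
    then have "x = (up ?T i ^^ Suc k) z" using z(3) by simp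
    then show ?thesis using z(1,2) by blast
  qed
qed

lemma orbit_finite: "finite (perm_orbit p v)"
proof -
  have "perm_orbit p v = (\<lambda>\<sigma>. (\<lambda>m. if m < p then v (\<sigma> m) else 0)) ` {\<sigma>. \<sigma> permutes {..<p}}"
    unfolding perm_orbit_def by auto
  then show ?thesis using finite_permutations[of "{..<p}"] by simp
qed

lemma Fa_neg: "Fa p (\<lambda>m. - a m) x = - Fa p a x"
  unfolding Fa_def by (simp add: sum_negf)

lemma permutes_fix:
  assumes "\<tau> permutes S" "\<tau> i = i"
  shows "\<tau> permutes (S - {i})"
proof -
  have 1: "\<forall>y. \<exists>!x. \<tau> x = y" using assms(1) unfolding permutes_def by blast
  have 2: "\<forall>x. x \<notin> S - {i} \<longrightarrow> \<tau> x = x" using assms(2) permutes_not_in[OF assms(1)] by blast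
  show ?thesis unfolding permutes_def using 1 2 by blast
qed

lemma card_Z:
  assumes v: "inj_on v {..<p}" and ip: "i < p" and k0: "k0 < p" "v k0 = m0"
  shows "card {z \<in> perm_orbit p v. z i = m0} \<le> fact (p - 1)"
proof -
  let ?g = "\<lambda>\<tau>. (\<lambda>m. if m < p then v ((Transposition.transpose i k0 \<circ> \<tau>) m) else (0::real))"
  let ?P = "{\<tau>. \<tau> permutes ({..<p} - {i})}"
  have sub: "{z \<in> perm_orbit p v. z i = m0} \<subseteq> ?g ` ?P"
  proof
    fix z assume zz: "z \<in> {z \<in> perm_orbit p v. z i = m0}"
    then obtain \<sigma> where s: "z = (\<lambda>m. if m < p then v (\<sigma> m) else 0)" "\<sigma> permutes {..<p}"
      unfolding perm_orbit_def by auto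
    have "\<sigma> i \<in> {..<p}" using permutes_in_image[OF s(2), of i] ip by simp
    moreover have "v (\<sigma> i) = v k0" using zz s(1) ip k0 by auto
    ultimately have si: "\<sigma> i = k0" using v k0 unfolding inj_on_def by auto
    define \<tau> where "\<tau> = Transposition.transpose i k0 \<circ> \<sigma>"
    have "\<tau> permutes {..<p}" unfolding \<tau>_def
      using s(2) permutes_swap_id[of i "{..<p}" k0] ip k0 by (intro permutes_compose) auto
    moreover have "\<tau> i = i" unfolding \<tau>_def using si by simp
    ultimately have "\<tau> permutes ({..<p} - {i})" by (rule permutes_fix)
    then have tP: "\<tau> \<in> ?P" by simp
    have eq: "Transposition.transpose i k0 \<circ> \<tau> = \<sigma>" unfolding \<tau>_def
      by (simp add: fun_eq_iff)
    have "z = ?g \<tau>" unfolding eq by (rule s(1))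
    then show "z \<in> ?g ` ?P" by (rule rev_image_eqI[OF tP])
  qed
  have finP: "finite ?P" by (rule finite_permutations) auto
  have "card {z \<in> perm_orbit p v. z i = m0} \<le> card (?g ` ?P)"
    using sub finP by (intro card_mono) auto
  also have "\<dots> \<le> card ?P" using finP by (rule card_image_le)
  also have "\<dots> = fact (p - 1)" using ip by (intro card_permutations) auto
  finally show ?thesis .
qed

theorem corollary4p2:
  fixes p :: nat and a v :: "nat \<Rightarrow> real"
  assumes "prime p" and "p \<ge> 3"
    and "\<exists>m<p. a m \<noteq> 0"
    and "\<exists>i<p. \<forall>j<p. j \<noteq> i \<longrightarrow> a j \<noteq> a i"
    and "inj_on v {..<p}"
  shows "card (hyperplane_perp p a \<inter> perm_orbit p v) \<le> fact (p - 1)"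
proof -
  obtain i where ip: "i < p" and uniq: "\<forall>j<p. j \<noteq> i \<longrightarrow> a j \<noteq> a i" using assms(4) by blast
  have v: "inj_on v {..<p}" by fact
  let ?O = "perm_orbit p v"
  let ?V = "v ` {..<p}"
  define m0 where "m0 = Min ?V"
  have "m0 \<in> ?V" unfolding m0_def using ip by (intro Min_in) auto
  then obtain k0 where k0: "k0 < p" "v k0 = m0" by auto
  define na where "na = (\<lambda>m. - a m)"
  let ?TA = "Tset p a i"
  let ?TB = "Tset p na i"
  define chain where "chain z = {(up ?TA i ^^ k) z | k. True} \<union> {(up ?TB i ^^ k) z | k. True}" for z
  define Z where "Z = {z \<in> ?O. z i = m0}"
  define X where "X = hyperplane_perp p a \<inter> ?O"
  have XF: "\<And>x. x \<in> X \<Longrightarrow> Fa p a x = 0 \<and> x \<in> ?O"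
    unfolding X_def hyperplane_perp_def Fa_def by auto
  have finX: "finite X" unfolding X_def using orbit_finite by auto
  have finZ: "finite Z" unfolding Z_def using orbit_finite by auto
  have cov: "X \<subseteq> (\<Union>z\<in>Z. X \<inter> chain z)"
  proof
    fix x assume xX: "x \<in> X"
    then have xO: "x \<in> ?O" using XF by auto
    have "m0 \<in> x ` {..<p}" using orbit_props(2)[OF xO v] \<open>m0 \<in> ?V\<close> by simp
    then obtain j0 where j0: "j0 < p" "x j0 = m0" by auto
    have "\<exists>z\<in>Z. x \<in> chain z"
    proof (cases "j0 = i \<or> a i < a j0")
      case True
      then have "x i = m0 \<or> (\<exists>j0\<in>?TA. x j0 = m0)" using j0 unfolding Tset_def by auto
      from cover[OF v ip m0_def xO this] obtain z k where "z \<in> ?O" "z i = m0" "x = (up ?TA i ^^ k) z"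
        by blast
      then show ?thesis unfolding Z_def chain_def by blast
    next
      case False
      then have "a j0 \<noteq> a i" using uniq j0 by auto
      with False have "a j0 < a i" by auto
      then have "\<exists>j0\<in>?TB. x j0 = m0" using j0 unfolding Tset_def na_def by auto
      from cover[OF v ip m0_def xO, of na] this obtain z k where "z \<in> ?O" "z i = m0" "x = (up ?TB i ^^ k) z"
        by blast
      then show ?thesis unfolding Z_def chain_def by blast
    qed
    then show "x \<in> (\<Union>z\<in>Z. X \<inter> chain z)" using xX by blast
  qed
  have one: "card (X \<inter> chain z) \<le> 1" if zZ: "z \<in> Z" for z
  proof -
    have fin: "finite (X \<inter> chain z)" using finX by auto
    have A: "Fa p a ((up ?TA i ^^ k) z) \<le> Fa p a z \<and> (Fa p a ((up ?TA i ^^ k) z) = Fa p a z \<longrightarrow> (up ?TA i ^^ k) z = z)" for k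
      using up_iter[of ?TA p a i] ip by auto
    have B: "Fa p na ((up ?TB i ^^ k) z) \<le> Fa p na z \<and> (Fa p na ((up ?TB i ^^ k) z) = Fa p na z \<longrightarrow> (up ?TB i ^^ k) z = z)" for k
      using up_iter[of ?TB p na i] ip by auto
    have A2: "(up ?TA i ^^ k) z = (up ?TA i ^^ k') z" if "Fa p a ((up ?TA i ^^ k) z) = Fa p a ((up ?TA i ^^ k') z)" for k k'
    proof (cases "k \<le> k'")
      case True then show ?thesis using up_iter2[of ?TA p a i k k' z] ip that by auto
    next
      case False then show ?thesis using up_iter2[of ?TA p a i k' k z] ip that by auto
    qed
    have B2: "(up ?TB i ^^ k) z = (up ?TB i ^^ k') z" if "Fa p na ((up ?TB i ^^ k) z) = Fa p na ((up ?TB i ^^ k') z)" for k k'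
    proof (cases "k \<le> k'")
      case True then show ?thesis using up_iter2[of ?TB p na i k k' z] ip that by auto
    next
      case False then show ?thesis using up_iter2[of ?TB p na i k' k z] ip that by auto
    qed
    have FN: "Fa p na y = - Fa p a y" for y unfolding na_def by (rule Fa_neg)
    have "\<forall>x1\<in>X \<inter> chain z. \<forall>x2\<in>X \<inter> chain z. x1 = x2"
    proof (intro ballI)
      fix x1 x2 assume x1: "x1 \<in> X \<inter> chain z" and x2: "x2 \<in> X \<inter> chain z"
      have f1: "Fa p a x1 = 0" and f2: "Fa p a x2 = 0" using x1 x2 XF by auto
      have AB: "x = z" if "x = (up ?TA i ^^ k) z" "y = (up ?TB i ^^ k') z" "Fa p a x = 0" "Fa p a y = 0" for x y k k'
      proof -
        have "Fa p a x \<le> Fa p a z" using A[of k] unfolding that(1) by blast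
        moreover have "Fa p a z \<le> Fa p a y" using B[of k'] FN unfolding that(2) by auto
        ultimately have "Fa p a x = Fa p a z" using that by auto
        then show ?thesis using A[of k] unfolding that(1) by blast
      qed
      have BA: "y = z" if "x = (up ?TA i ^^ k) z" "y = (up ?TB i ^^ k') z" "Fa p a x = 0" "Fa p a y = 0" for x y k k'
      proof -
        have "Fa p a x \<le> Fa p a z" using A[of k] unfolding that(1) by blast
        moreover have "Fa p a z \<le> Fa p a y" using B[of k'] FN unfolding that(2) by auto
        ultimately have "Fa p na y = Fa p na z" using that FN by auto
        then show ?thesis using B[of k'] unfolding that(2) by blast
      qed
      have c1: "(\<exists>k. x1 = (up ?TA i ^^ k) z) \<or> (\<exists>k. x1 = (up ?TB i ^^ k) z)"
        using x1 unfolding chain_def by blast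
      have c2: "(\<exists>k. x2 = (up ?TA i ^^ k) z) \<or> (\<exists>k. x2 = (up ?TB i ^^ k) z)"
        using x2 unfolding chain_def by blast
      show "x1 = x2"
      proof (cases "\<exists>k. x1 = (up ?TA i ^^ k) z")
        case True
        then obtain k where k: "x1 = (up ?TA i ^^ k) z" by blast
        show ?thesis
        proof (cases "\<exists>k. x2 = (up ?TA i ^^ k) z")
          case True
          then obtain k' where k': "x2 = (up ?TA i ^^ k') z" by blast
          have "Fa p a ((up ?TA i ^^ k) z) = Fa p a ((up ?TA i ^^ k') z)" using f1 f2 k k' by simp
          then show ?thesis using A2 k k' by blast
        next
          case False
          then obtain k' where k': "x2 = (up ?TB i ^^ k') z" using c2 by blast
          have "x1 = z" by (rule AB[OF k k' f1 f2])
          moreover have "x2 = z" by (rule BA[OF k k' f1 f2])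
          ultimately show ?thesis by simp
        qed
      next
        case False
        then obtain k where k: "x1 = (up ?TB i ^^ k) z" using c1 by blast
        show ?thesis
        proof (cases "\<exists>k. x2 = (up ?TA i ^^ k) z")
          case True
          then obtain k' where k': "x2 = (up ?TA i ^^ k') z" by blast
          have "x2 = z" by (rule AB[OF k' k f2 f1])
          moreover have "x1 = z" by (rule BA[OF k' k f2 f1])
          ultimately show ?thesis by simp
        next
          case False
          then obtain k' where k': "x2 = (up ?TB i ^^ k') z" using c2 by blast
          have "Fa p na ((up ?TB i ^^ k) z) = Fa p na ((up ?TB i ^^ k') z)" using f1 f2 k k' FN by simp
          then show ?thesis using B2 k k' by blast
        qed
      qed
    qed
    then show ?thesis using card_le_Suc0_iff_eq[OF fin] by simp
  qed
  have "card X \<le> card (\<Union>z\<in>Z. X \<inter> chain z)"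
    using cov finX by (intro card_mono) auto
  also have "\<dots> \<le> (\<Sum>z\<in>Z. card (X \<inter> chain z))" using finZ by (rule card_UN_le)
  also have "\<dots> \<le> (\<Sum>z\<in>Z. 1)" using one by (intro sum_mono) auto
  also have "\<dots> = card Z" by simp
  also have "\<dots> \<le> fact (p - 1)" unfolding Z_def using card_Z[OF v ip k0] .
  finally show ?thesis unfolding X_def .
qed

end
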